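(* Let $X\subset A^+$ be a finite set. Then $X$ is synchronized if and only if its degree $d(X)$ equals $1$.
   Context: A word $x\in A^*$ is synchronizing for $X$ if for all $u,v\in A^*$, $uxv\in X^*$ implies $ux\in X^*$ and $xv\in X^*$. $X$ is synchronized if there is a synchronizing word $x\in X^*$. The flower automaton of $X$ has states $\{(u,v)\in A^+\times A^+\mid uv\in X\}\cup\{\omega\}$, $\omega=(1,1)$ initial and terminal, and edges $(u,av)\xrightarrow{a}(ua,v)$ ($uav\in X$, $u,v\ne1$), $\omega\xrightarrow{a}(a,v)$ ($av\in X$, $v\ne1$), $(u,a)\xrightarrow{a}\omega$ ($ua\in X$, $u\ne1$), $\omega\xrightarrow{a}\omega$ ($a\in X$). For an automaton $\mathcal{A}$, $\varphi_\mathcal{A}(w)$ is the relation $\{(p,q)\mid$ there is a path $p\xrightarrow{w}q\}$. The rank of a relation $m$ on $Q$ is the least cardinality of a set $R$ with $m=uv$, $u\subseteq Q\times R$, $v\subseteq R\times Q$ (composition $uv=\{(p,q)\mid\exists r,(p,r)\in u,(r,q)\in v\}$). The degree $d(X)$ is the minimum rank of the nonempty relations in the monoid $\varphi_\mathcal{A}(A^* )$, where $\mathcal{A}$ is the flower automaton of $X$. *)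

theory Defs
  imports Main
begin

text \<open>Words over an alphabet are lists; the alphabet is a set A of letters,
  A^* = lists A, A^+ = lists A - {[]}.\<close>

definition star :: "'a list set \<Rightarrow> 'a list set" where
  "star X = concat ` lists X"

definition synchronizing :: "'a set \<Rightarrow> 'a list set \<Rightarrow> 'a list \<Rightarrow> bool" where
  "synchronizing A X x \<longleftrightarrow> x \<in> lists A \<and>
     (\<forall>u\<in>lists A. \<forall>v\<in>lists A. u @ x @ v \<in> star X \<longrightarrow> u @ x \<in> star X \<and> x @ v \<in> star X)"

definition synchronized :: "'a set \<Rightarrow> 'a list set \<Rightarrow> bool" where
  "synchronized A X \<longleftrightarrow> (\<exists>x\<in>star X. synchronizing A X x)"

definition flower_states :: "'a list set \<Rightarrow> ('a list \<times> 'a list) set" where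
  "flower_states X = {(u, v). u \<noteq> [] \<and> v \<noteq> [] \<and> u @ v \<in> X} \<union> {([], [])}"

definition flower_step :: "'a list set \<Rightarrow> 'a \<Rightarrow> (('a list \<times> 'a list) \<times> ('a list \<times> 'a list)) set" where
  "flower_step X a =
     {((u, a # v), (u @ [a], v)) | u v. u @ [a] @ v \<in> X \<and> u \<noteq> [] \<and> v \<noteq> []}
   \<union> {(([], []), ([a], v)) | v. a # v \<in> X \<and> v \<noteq> []}
   \<union> {((u, [a]), ([], [])) | u. u @ [a] \<in> X \<and> u \<noteq> []}
   \<union> {(([], []), ([], [])) | b. b = a \<and> [a] \<in> X}"

fun flower_phi :: "'a list set \<Rightarrow> 'a list \<Rightarrow> (('a list \<times> 'a list) \<times> ('a list \<times> 'a list)) set" where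
  "flower_phi X [] = Id_on (flower_states X)"
| "flower_phi X (a # w) = flower_step X a O flower_phi X w"

text \<open>R ranges over sets of naturals,
  which suffices since the rank is at most |Q|.\<close>

definition rel_rank :: "'q set \<Rightarrow> ('q \<times> 'q) set \<Rightarrow> nat" where
  "rel_rank Q m = (LEAST k. \<exists>(R::nat set) u v. finite R \<and> card R = k \<and>
       u \<subseteq> Q \<times> R \<and> v \<subseteq> R \<times> Q \<and> m = u O v)"

definition degree :: "'a set \<Rightarrow> 'a list set \<Rightarrow> nat" where
  "degree A X = (LEAST k. \<exists>w\<in>lists A. flower_phi X w \<noteq> {} \<and>
       rel_rank (flower_states X) (flower_phi X w) = k)"

end

theory Submission
  imports Defs
begin

lemma star_Nil[simp]: "[] \<in> star X"
  unfolding star_def by (metis concat.simps(1) image_eqI lists.Nil)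

lemma star_app: "a \<in> star X \<Longrightarrow> b \<in> star X \<Longrightarrow> a @ b \<in> star X"
  unfolding star_def
  by (smt (verit, ccfv_threshold) append_in_lists_conv concat_append image_iff)

lemma star_X: "x \<in> X \<Longrightarrow> x \<in> star X"
  unfolding star_def
  by (metis concat.simps(1,2) append_Nil2 image_eqI lists.Cons lists.Nil)

lemma star_lists: "X \<subseteq> lists A \<Longrightarrow> star X \<subseteq> lists A"
proof
  fix y assume "X \<subseteq> lists A" "y \<in> star X"
  then obtain xs where "xs \<in> lists X" "y = concat xs" unfolding star_def by auto
  then show "y \<in> lists A" using \<open>X \<subseteq> lists A\<close> by (induction xs arbitrary: y) auto
qed

lemma star_rep: "z \<in> star X \<Longrightarrow> concat (replicate n z) \<in> star X"
  by (induction n) (auto intro: star_app)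

lemma len_rep: "length (concat (replicate n z)) = n * length z"
  by (induction n) auto

lemma step_states: "flower_step X a \<subseteq> flower_states X \<times> flower_states X"
  unfolding flower_step_def flower_states_def by auto

lemma phi_states: "flower_phi X w \<subseteq> flower_states X \<times> flower_states X"
proof (induction w)
  case Nil
  then show ?case by auto
next
  case (Cons a w)
  then show ?case using step_states[of X a] by auto
qed

lemma phi_append: "flower_phi X (a @ b) = flower_phi X a O flower_phi X b"
proof (induction a)
  case Nil
  show ?case using phi_states[of X b] by auto
next
  case (Cons x a)
  then show ?case by (simp add: O_assoc)
qed

lemma state_star: "p \<in> flower_states X \<Longrightarrow> fst p @ snd p \<in> star X"
  unfolding flower_states_def by (auto intro: star_X)

lemma phi_L: "(p,q) \<in> flower_phi X w \<Longrightarrow> fst p @ w @ snd q \<in> star X"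
proof (induction w arbitrary: p)
  case Nil
  then show ?case using state_star[of p X] by auto
next
  case (Cons a w)
  then obtain r where pr: "(p,r) \<in> flower_step X a" and rq: "(r,q) \<in> flower_phi X w" by auto
  have IH: "fst r @ w @ snd q \<in> star X" using Cons.IH rq by auto
  from pr show ?case
    unfolding flower_step_def
  proof (elim UnE CollectE exE conjE)
    fix u v assume "(p, r) = ((u, a # v), u @ [a], v)"
    then show ?thesis using IH by auto
  next
    fix v assume "(p, r) = (([], []), [a], v)"
    then show ?thesis using IH by auto
  next
    fix u assume "(p, r) = ((u, [a]), [], [])" "u @ [a] \<in> X"
    then show ?thesis using IH star_app[OF star_X[of "u@[a]"] IH] by auto
  next
    fix b assume "(p, r) = (([], []), [], [])" "[a] \<in> X"
    then show ?thesis using IH star_app[OF star_X[of "[a]"] IH] by auto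
  qed
qed

lemma phi_F1: "(p,q) \<in> flower_phi X w \<Longrightarrow>
   (\<exists>t\<in>star X. w = snd p @ t @ fst q) \<or> (fst q = fst p @ w \<and> snd p = w @ snd q)"
proof (induction w arbitrary: p)
  case Nil
  then show ?case by auto
next
  case (Cons a w)
  then obtain r where pr: "(p,r) \<in> flower_step X a" and rq: "(r,q) \<in> flower_phi X w" by auto
  have IH: "(\<exists>t\<in>star X. w = snd r @ t @ fst q) \<or> (fst q = fst r @ w \<and> snd r = w @ snd q)"
    using Cons.IH rq by auto
  have qs: "q \<in> flower_states X" using phi_states rq by blast
  have "(\<exists>u v. p = (u, a#v) \<and> r = (u@[a], v)) \<or> (\<exists>v. p=([],[]) \<and> r = ([a],v) \<and> a#v \<in> X)
     \<or> (\<exists>u. p = (u,[a]) \<and> r = ([],[])) \<or> (p = ([],[]) \<and> r = ([],[]) \<and> [a] \<in> X)"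
    using pr unfolding flower_step_def by blast
  then show ?case
  proof (elim disjE exE conjE)
    fix u v assume "p = (u, a # v)" "r = (u @ [a], v)"
    then show ?thesis using IH by auto
  next
    fix v assume pp: "p = ([],[])" "r = ([a],v)" and av: "a # v \<in> X"
    from IH show ?thesis
    proof
      assume "\<exists>t\<in>star X. w = snd r @ t @ fst q"
      then obtain t where "t \<in> star X" "w = v @ t @ fst q" using pp by auto
      then show ?thesis using pp star_app[OF star_X[OF av]]
        by (intro disjI1 bexI[of _ "(a#v) @ t"]) auto
    next
      assume "fst q = fst r @ w \<and> snd r = w @ snd q"
      then show ?thesis using pp by (intro disjI1 bexI[of _ "[]"]) auto
    qed
  next
    fix u assume pp: "p = (u,[a])" "r = ([],[])"
    from IH show ?thesis
    proof
      assume "\<exists>t\<in>star X. w = snd r @ t @ fst q"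
      then show ?thesis using pp by auto
    next
      assume h: "fst q = fst r @ w \<and> snd r = w @ snd q"
      then have "w = []" "snd q = []" "fst q = []" using pp by auto
      then show ?thesis using pp by (intro disjI1 bexI[of _ "[]"]) auto
    qed
  next
    assume pp: "p = ([],[])" "r = ([],[])" and aX: "[a] \<in> X"
    from IH show ?thesis
    proof
      assume "\<exists>t\<in>star X. w = snd r @ t @ fst q"
      then obtain t where "t \<in> star X" "w = t @ fst q" using pp by auto
      then show ?thesis using pp star_app[OF star_X[OF aX]]
        by (intro disjI1 bexI[of _ "[a] @ t"]) auto
    next
      assume "fst q = fst r @ w \<and> snd r = w @ snd q"
      then have "w = []" "fst q = []" using pp by auto
      then show ?thesis using pp star_X[OF aX] by (intro disjI1 bexI[of _ "[a]"]) auto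
    qed
  qed
qed

lemma walk: "u \<noteq> [] \<Longrightarrow> u @ v1 @ v2 \<in> X \<Longrightarrow> v2 \<noteq> [] \<Longrightarrow>
   ((u, v1 @ v2), (u @ v1, v2)) \<in> flower_phi X v1"
proof (induction v1 arbitrary: u)
  case Nil
  then show ?case by (auto simp: flower_states_def)
next
  case (Cons a v1)
  have "((u, a # v1 @ v2), (u @ [a], v1 @ v2)) \<in> flower_step X a"
    using Cons.prems unfolding flower_step_def by auto
  moreover have "((u @ [a], v1 @ v2), (u @ [a] @ v1, v2)) \<in> flower_phi X v1"
    using Cons.IH[of "u @ [a]"] Cons.prems by auto
  ultimately show ?case by auto
qed

lemma walk_end: "u \<noteq> [] \<Longrightarrow> u @ v \<in> X \<Longrightarrow> v \<noteq> [] \<Longrightarrow>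
   ((u, v), ([], [])) \<in> flower_phi X v"
proof -
  assume h: "u \<noteq> []" "u @ v \<in> X" "v \<noteq> []"
  then obtain v1 a where v: "v = v1 @ [a]" by (metis rev_exhaust)
  have "((u, v1 @ [a]), (u @ v1, [a])) \<in> flower_phi X v1"
    using walk[of u v1 "[a]" X] h v by auto
  moreover have "((u @ v1, [a]), ([], [])) \<in> flower_phi X [a]"
    using h v by (auto simp: flower_step_def flower_states_def)
  ultimately show ?thesis using v phi_append[of X v1 "[a]"] by auto
qed

lemma star_phi: "t \<in> star X \<Longrightarrow> (([],[]),([],[])) \<in> flower_phi X t"
proof -
  assume "t \<in> star X"
  then obtain xs where xs: "xs \<in> lists X" "t = concat xs" unfolding star_def by auto
  have "X \<subseteq> lists UNIV - {[]} \<Longrightarrow> True" by simp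
  show ?thesis using xs
  proof (induction xs arbitrary: t)
    case Nil
    then show ?case by (auto simp: flower_states_def)
  next
    case (Cons x xs)
    have xX: "x \<in> X" using Cons by auto
    have "(([],[]),([],[])) \<in> flower_phi X x"
    proof (cases x)
      case Nil
      then show ?thesis by (auto simp: flower_states_def)
    next
      case xc: (Cons a v)
      show ?thesis
      proof (cases "v = []")
        case True
        then show ?thesis using xc xX
          by (auto simp: flower_step_def flower_states_def)
      next
        case False
        have "(([],[]),([a],v)) \<in> flower_step X a"
          using xc False xX by (auto simp: flower_step_def)
        moreover have "(([a],v),([],[])) \<in> flower_phi X v"
          using walk_end[of "[a]" v X] xc False xX by auto
        ultimately show ?thesis using xc by auto
      qed
    qed
    moreover have "(([],[]),([],[])) \<in> flower_phi X (concat xs)"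
      using Cons by auto
    ultimately show ?case using Cons phi_append[of X x "concat xs"] by auto
  qed
qed

lemma F2: "p \<in> flower_states X \<Longrightarrow> q \<in> flower_states X \<Longrightarrow> t \<in> star X \<Longrightarrow>
   (p, q) \<in> flower_phi X (snd p @ t @ fst q)"
proof -
  assume ps: "p \<in> flower_states X" and qs: "q \<in> flower_states X" and t: "t \<in> star X"
  have a: "(p, ([],[])) \<in> flower_phi X (snd p)"
  proof (cases "p = ([],[])")
    case True then show ?thesis by (auto simp: flower_states_def)
  next
    case False
    then show ?thesis using ps walk_end[of "fst p" "snd p" X]
      by (auto simp: flower_states_def)
  qed
  have c: "(([],[]), q) \<in> flower_phi X (fst q)"
  proof (cases "q = ([],[])")
    case True then show ?thesis by (auto simp: flower_states_def)
  next
    case False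
    then obtain a u1 v' where q: "q = (a # u1, v')" "(a#u1) @ v' \<in> X" "v' \<noteq> []"
      using qs unfolding flower_states_def by (cases q; cases "fst q") auto
    have "(([],[]),([a], u1 @ v')) \<in> flower_step X a"
      using q by (auto simp: flower_step_def)
    moreover have "(([a], u1 @ v'), ([a] @ u1, v')) \<in> flower_phi X u1"
      using walk[of "[a]" u1 v' X] q by auto
    ultimately show ?thesis using q by auto
  qed
  show ?thesis using a c star_phi[OF t] phi_append by blast
qed

lemma states_finite: "finite X \<Longrightarrow> finite (flower_states X)"
proof -
  assume f: "finite X"
  have "flower_states X \<subseteq> (\<Union>x\<in>X. (\<lambda>i. (take i x, drop i x)) ` {..length x}) \<union> {([],[])}"
  proof
    fix p assume "p \<in> flower_states X"
    then show "p \<in> (\<Union>x\<in>X. (\<lambda>i. (take i x, drop i x)) ` {..length x}) \<union> {([],[])}"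
      unfolding flower_states_def
      by (auto intro!: bexI[of _ "fst p @ snd p"] image_eqI[of _ _ "length (fst p)"])
  qed
  then show ?thesis using f by (auto intro: finite_subset)
qed

definition rect :: "('q \<times> 'q) set \<Rightarrow> bool" where
  "rect m \<longleftrightarrow> (\<forall>p q1 p2 q. (p,q1) \<in> m \<longrightarrow> (p2,q) \<in> m \<longrightarrow> (p,q) \<in> m)"


lemma rank_witness: "finite Q \<Longrightarrow> m \<subseteq> Q \<times> Q \<Longrightarrow>
  \<exists>k (R::nat set) u v. finite R \<and> card R = k \<and> u \<subseteq> Q \<times> R \<and> v \<subseteq> R \<times> Q \<and> m = u O v"
proof -
  assume fQ: "finite Q" and mQ: "m \<subseteq> Q \<times> Q"
  obtain f :: "_ \<Rightarrow> nat" and n where "f ` Q = {i. i < n}" "inj_on f Q"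
    using finite_imp_inj_to_nat_seg[OF fQ] by blast
  define u where "u = {(p, f q) | p q. (p,q) \<in> m}"
  define v where "v = {(f q, q) | q. q \<in> Q}"
  have "m = u O v"
  proof
    show "m \<subseteq> u O v" using mQ unfolding u_def v_def by blast
    show "u O v \<subseteq> m"
    proof
      fix x assume "x \<in> u O v"
      then obtain p q q' where "x = (p,q')" "(p,q) \<in> m" "q' \<in> Q" "f q = f q'"
        unfolding u_def v_def by blast
      moreover then have "q \<in> Q" using mQ by blast
      ultimately show "x \<in> m" using \<open>inj_on f Q\<close> by (metis inj_on_def)
    qed
  qed
  moreover have "u \<subseteq> Q \<times> f ` Q" "v \<subseteq> f ` Q \<times> Q" using mQ unfolding u_def v_def by blast+
  ultimately show ?thesis using fQ
    by (intro exI[of _ "card (f ` Q)"] exI[of _ "f ` Q"] exI[of _ u] exI[of _ v]) simp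
qed

lemma rank_pos: "finite Q \<Longrightarrow> m \<subseteq> Q \<times> Q \<Longrightarrow> m \<noteq> {} \<Longrightarrow> rel_rank Q m \<ge> 1"
proof -
  assume fQ: "finite Q" and mQ: "m \<subseteq> Q \<times> Q" and ne: "m \<noteq> {}"
  obtain k where "\<exists>(R::nat set) u v. finite R \<and> card R = k \<and> u \<subseteq> Q \<times> R \<and> v \<subseteq> R \<times> Q \<and> m = u O v"
    using rank_witness[OF fQ mQ] by blast
  from LeastI[of "\<lambda>k. \<exists>(R::nat set) u v. finite R \<and> card R = k \<and> u \<subseteq> Q \<times> R \<and> v \<subseteq> R \<times> Q \<and> m = u O v", OF this]
  obtain R :: "nat set" and u v where "finite R" "card R = rel_rank Q m" "u \<subseteq> Q \<times> R" "m = u O v"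
    unfolding rel_rank_def by blast
  then show ?thesis using ne by (cases "rel_rank Q m = 0") auto
qed

lemma rank1_rect: "finite Q \<Longrightarrow> m \<subseteq> Q \<times> Q \<Longrightarrow> rel_rank Q m = 1 \<Longrightarrow> rect m"
proof -
  assume fQ: "finite Q" and mQ: "m \<subseteq> Q \<times> Q" and r: "rel_rank Q m = 1"
  obtain k where "\<exists>(R::nat set) u v. finite R \<and> card R = k \<and> u \<subseteq> Q \<times> R \<and> v \<subseteq> R \<times> Q \<and> m = u O v"
    using rank_witness[OF fQ mQ] by blast
  from LeastI[of "\<lambda>k. \<exists>(R::nat set) u v. finite R \<and> card R = k \<and> u \<subseteq> Q \<times> R \<and> v \<subseteq> R \<times> Q \<and> m = u O v", OF this]
  obtain R :: "nat set" and u v where "finite R" "card R = 1" "u \<subseteq> Q \<times> R" "v \<subseteq> R \<times> Q" "m = u O v"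
    unfolding rel_rank_def r[symmetric] by blast
  then obtain r0 where "R = {r0}" using card_1_singletonE by blast
  then show ?thesis unfolding rect_def using \<open>m = u O v\<close> \<open>u \<subseteq> Q \<times> R\<close> \<open>v \<subseteq> R \<times> Q\<close> by blast
qed

lemma rect_rank1: "m \<subseteq> Q \<times> Q \<Longrightarrow> m \<noteq> {} \<Longrightarrow> rect m \<Longrightarrow> rel_rank Q m = 1"
proof -
  assume mQ: "m \<subseteq> Q \<times> Q" and ne: "m \<noteq> {}" and rc: "rect m"
  let ?P = "\<lambda>k. \<exists>(R::nat set) u v. finite R \<and> card R = k \<and> u \<subseteq> Q \<times> R \<and> v \<subseteq> R \<times> Q \<and> m = u O v"
  have "?P 1"
  proof (intro exI conjI)
    show "finite {0::nat}" "card {0::nat} = 1" by auto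
    show "Domain m \<times> {0::nat} \<subseteq> Q \<times> {0}" "{0::nat} \<times> Range m \<subseteq> {0} \<times> Q" using mQ by auto
    show "m = (Domain m \<times> {0::nat}) O ({0} \<times> Range m)"
    proof
      show "m \<subseteq> (Domain m \<times> {0::nat}) O ({0} \<times> Range m)" by auto
      show "(Domain m \<times> {0::nat}) O ({0} \<times> Range m) \<subseteq> m"
        using rc unfolding rect_def by auto
    qed
  qed
  moreover have "\<not> ?P 0" using ne by auto
  ultimately show ?thesis unfolding rel_rank_def
    by (intro Least_equality) (auto simp: not_less_eq_eq[symmetric] le_simps)
qed

lemma prefix_split: "(a::'x list) @ b = c @ d \<Longrightarrow> length a \<le> length c \<Longrightarrow> \<exists>s. c = a @ s"
proof -
  assume h: "a @ b = c @ d" and l: "length a \<le> length c"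
  have "take (length c) (a @ b) = c" unfolding h by simp
  then have "c = a @ take (length c - length a) b" using l by simp
  then show ?thesis by blast
qed

lemma suffix_split: "(a::'x list) @ b = c @ d \<Longrightarrow> length b \<le> length d \<Longrightarrow> \<exists>s. d = s @ b"
proof -
  assume h: "a @ b = c @ d" and l: "length b \<le> length d"
  have "rev b @ rev a = rev d @ rev c" using h by (metis rev_append)
  then obtain s where "rev d = rev b @ s" using prefix_split[of "rev b" "rev a" "rev d" "rev c"] l by auto
  then have "d = rev s @ b" by (metis rev_append rev_rev_ident)
  then show ?thesis by blast
qed

lemma F1': "(p,q) \<in> flower_phi X w \<Longrightarrow> length (snd p) < length w \<Longrightarrow>
   \<exists>t\<in>star X. w = snd p @ t @ fst q"
  using phi_F1[of p q X w] by auto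

lemma rect_comp: "rect m \<Longrightarrow> rect (a O m O b)"
  unfolding rect_def by blast

lemma sync_app: "synchronizing A X x \<Longrightarrow> e \<in> star X \<Longrightarrow> X \<subseteq> lists A \<Longrightarrow>
   synchronizing A X (x @ e)"
  unfolding synchronizing_def
proof (intro conjI ballI impI)
  assume h: "x \<in> lists A \<and> (\<forall>u\<in>lists A. \<forall>v\<in>lists A. u @ x @ v \<in> star X \<longrightarrow> u @ x \<in> star X \<and> x @ v \<in> star X)"
    and e: "e \<in> star X" and XA: "X \<subseteq> lists A"
  have eA: "e \<in> lists A" using e star_lists[OF XA] by auto
  then show "x @ e \<in> lists A" using h by auto
  fix u v assume uA: "u \<in> lists A" and vA: "v \<in> lists A" and m: "u @ (x @ e) @ v \<in> star X"
  have evA: "e @ v \<in> lists A" using eA vA by auto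
  have m2: "u @ x @ (e @ v) \<in> star X" using m by simp
  have "u @ x \<in> star X \<and> x @ (e @ v) \<in> star X"
    using h[THEN conjunct2, rule_format, OF uA evA m2] .
  then have "u @ x \<in> star X" "x @ e @ v \<in> star X" by auto
  then show "u @ x @ e \<in> star X" "(x @ e) @ v \<in> star X"
    using star_app[of "u @ x" X e] e by auto
qed

lemma lengths_states: "p \<in> flower_states X \<Longrightarrow> \<forall>x\<in>X. length x < M \<Longrightarrow> 0 < M \<Longrightarrow>
   length (fst p) < M \<and> length (snd p) < M"
  unfolding flower_states_def
proof (cases p)
  case (Pair a b)
  assume "p \<in> {(u, v). u \<noteq> [] \<and> v \<noteq> [] \<and> u @ v \<in> X} \<union> {([], [])}" "\<forall>x\<in>X. length x < M" "0 < M"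
  then show ?thesis using Pair by auto
qed

lemma states_lists: "p \<in> flower_states X \<Longrightarrow> X \<subseteq> lists A \<Longrightarrow> fst p \<in> lists A \<and> snd p \<in> lists A"
  using state_star[of p X] star_lists[of X A] by auto

lemma key:
  assumes XA: "X \<subseteq> lists A" and sy: "synchronizing A X z" and zs: "z \<in> star X"
    and yA: "y \<in> lists A" and len: "\<forall>x\<in>X. length x < length y" and ypos: "0 < length y"
  shows "rect (flower_phi X (y @ z @ z @ y))"
  unfolding rect_def
proof (intro allI impI)
  let ?w = "y @ z @ z @ y"
  fix p q1 p2 q assume pq1: "(p, q1) \<in> flower_phi X ?w" and p2q: "(p2, q) \<in> flower_phi X ?w"
  have st: "p \<in> flower_states X" "q1 \<in> flower_states X" "p2 \<in> flower_states X" "q \<in> flower_states X"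
    using pq1 p2q phi_states by blast+
  note L = lengths_states[OF _ len ypos]
  have zA: "z \<in> lists A" using sy unfolding synchronizing_def by auto
  have syn: "\<And>u v. u \<in> lists A \<Longrightarrow> v \<in> lists A \<Longrightarrow> u @ z @ v \<in> star X \<Longrightarrow> u @ z \<in> star X \<and> z @ v \<in> star X"
    using sy unfolding synchronizing_def by auto
  obtain t1 where t1: "t1 \<in> star X" "?w = snd p @ t1 @ fst q1"
    using F1'[OF pq1] L[OF st(1)] by fastforce
  obtain s1 where s1: "y = snd p @ s1"
    using prefix_split[of "snd p" "t1 @ fst q1" y "z @ z @ y"] t1 L[OF st(1)] by auto
  have e1: "s1 @ z @ z @ y = t1 @ fst q1" using t1 s1 by simp
  have "(s1 @ z @ z @ y) @ snd q1 = (t1 @ fst q1) @ snd q1" using e1 by simp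
  then have "s1 @ z @ (z @ y @ snd q1) = t1 @ (fst q1 @ snd q1)" by simp
  moreover have "t1 @ (fst q1 @ snd q1) \<in> star X"
    using star_app[OF t1(1) state_star[OF st(2)]] .
  ultimately have "s1 @ z @ (z @ y @ snd q1) \<in> star X" by (simp only:)
  moreover have "s1 \<in> lists A" using yA s1 by auto
  moreover have "z @ y @ snd q1 \<in> lists A" using zA yA states_lists[OF st(2) XA] by auto
  ultimately have a1: "s1 @ z \<in> star X" using syn by blast
  obtain t2 where t2: "t2 \<in> star X" "?w = snd p2 @ t2 @ fst q"
    using F1'[OF p2q] L[OF st(3)] by fastforce
  have "(snd p2 @ t2) @ fst q = (y @ z @ z) @ y" using t2 by simp
  then obtain s2 where s2: "y = s2 @ fst q"
    using suffix_split[of "snd p2 @ t2" "fst q" "y @ z @ z" y] L[OF st(4)] by auto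
  have e2: "y @ z @ z @ s2 = snd p2 @ t2" using t2 s2 by simp
  have "fst p2 @ (y @ z @ z @ s2) = fst p2 @ (snd p2 @ t2)" using e2 by simp
  then have "(fst p2 @ y @ z) @ z @ s2 = (fst p2 @ snd p2) @ t2" by simp
  moreover have "(fst p2 @ snd p2) @ t2 \<in> star X"
    using star_app[OF state_star[OF st(3)] t2(1)] .
  ultimately have "(fst p2 @ y @ z) @ z @ s2 \<in> star X" by (simp only:)
  moreover have "s2 \<in> lists A" using yA s2 by auto
  moreover have "fst p2 @ y @ z \<in> lists A" using zA yA states_lists[OF st(3) XA] by auto
  ultimately have a2: "z @ s2 \<in> star X" using syn by blast
  have "?w = snd p @ ((s1 @ z) @ (z @ s2)) @ fst q" using s1 s2 by simp
  then show "(p, q) \<in> flower_phi X ?w"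
    using F2[OF st(1) st(4) star_app[OF a1 a2]] by simp
qed


lemma degree_one:
  assumes fX: "finite X"
  shows "degree A X = 1 \<longleftrightarrow> (\<exists>w\<in>lists A. flower_phi X w \<noteq> {} \<and> rect (flower_phi X w))"
proof -
  let ?Q = "flower_states X"
  have fQ: "finite ?Q" using states_finite[OF fX] .
  have sub: "\<And>w. flower_phi X w \<subseteq> ?Q \<times> ?Q" using phi_states by blast
  let ?P = "\<lambda>k. \<exists>w\<in>lists A. flower_phi X w \<noteq> {} \<and> rel_rank ?Q (flower_phi X w) = k"
  show ?thesis
  proof
    assume d: "degree A X = 1"
    have ne: "flower_phi X [] \<noteq> {}" by (auto simp: flower_states_def)
    have "?P (rel_rank ?Q (flower_phi X []))" using ne by (intro bexI[of _ "[]"] conjI) auto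
    then have "?P (degree A X)" unfolding degree_def by (rule LeastI)
    then show "\<exists>w\<in>lists A. flower_phi X w \<noteq> {} \<and> rect (flower_phi X w)"
      using d rank1_rect[OF fQ sub] by auto
  next
    assume "\<exists>w\<in>lists A. flower_phi X w \<noteq> {} \<and> rect (flower_phi X w)"
    then obtain w where w: "w \<in> lists A" "flower_phi X w \<noteq> {}" "rect (flower_phi X w)" by auto
    have "?P 1" using w rect_rank1[OF sub] by auto
    moreover have "\<not> ?P 0" using rank_pos[OF fQ sub] by (metis not_one_le_zero)
    ultimately show "degree A X = 1" unfolding degree_def
      by (intro Least_equality) (auto simp: less_Suc_eq_le le_Suc_eq)
  qed
qed

theorem mainTheorem12:
  fixes A :: "'a set" and X :: "'a list set"
  assumes "finite X" and "X \<subseteq> lists A - {[]}"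
  shows "synchronized A X \<longleftrightarrow> degree A X = 1"
proof -
  have XA: "X \<subseteq> lists A" using assms(2) by auto
  define om :: "'a list \<times> 'a list" where "om = ([],[])"
  show ?thesis unfolding degree_one[OF assms(1)]
  proof
    assume "synchronized A X"
    then obtain x where x: "x \<in> star X" "synchronizing A X x" unfolding synchronized_def by auto
    show "\<exists>w\<in>lists A. flower_phi X w \<noteq> {} \<and> rect (flower_phi X w)"
    proof (cases "X = {}")
      case True
      have "flower_phi X [] = {(([],[]),([],[]))}" using True by (auto simp: flower_states_def)
      then show ?thesis by (intro bexI[of _ "[]"]) (auto simp: rect_def)
    next
      case False
      then obtain e where e: "e \<in> X" by auto
      have ene: "e \<noteq> []" using e assms(2) by auto
      define z where "z = x @ e"
      have zs: "z \<in> star X" unfolding z_def using star_app[OF x(1) star_X[OF e]] .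
      have sz: "synchronizing A X z" unfolding z_def using sync_app[OF x(2) star_X[OF e] XA] .
      have zA: "z \<in> lists A" using sz unfolding synchronizing_def by auto
      have zne: "length z \<ge> 1" using ene unfolding z_def by (cases e) auto
      define M where "M = Suc (Max (length ` X))"
      have lenX: "\<forall>x\<in>X. length x < M" unfolding M_def using assms(1) by (auto simp: le_imp_less_Suc)
      define y where "y = concat (replicate M z)"
      have ylen: "length y \<ge> M" unfolding y_def len_rep using zne by simp
      have yA: "y \<in> lists A" using star_rep[OF zs, of M] star_lists[OF XA] unfolding y_def by auto
      have len: "\<forall>x\<in>X. length x < length y" using lenX ylen by fastforce
      have ypos: "0 < length y" using ylen unfolding M_def by linarith
      let ?w = "y @ z @ z @ y"
      have ws: "?w \<in> star X" using star_app star_rep[OF zs, of M] zs unfolding y_def by metis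
      have "(([],[]),([],[])) \<in> flower_phi X ?w" using star_phi[OF ws] .
      then have "flower_phi X ?w \<noteq> {}" by auto
      moreover have "?w \<in> lists A" using yA zA by auto
      moreover have "rect (flower_phi X ?w)" using key[OF XA sz zs yA len ypos] .
      ultimately show ?thesis by blast
    qed
  next
    assume "\<exists>w\<in>lists A. flower_phi X w \<noteq> {} \<and> rect (flower_phi X w)"
    then obtain w where w: "w \<in> lists A" "flower_phi X w \<noteq> {}" "rect (flower_phi X w)" by auto
    then obtain p q where pq: "(p,q) \<in> flower_phi X w" by auto
    have st: "p \<in> flower_states X" "q \<in> flower_states X" using pq phi_states by blast+
    have oms: "om \<in> flower_states X" unfolding om_def flower_states_def by auto
    have a: "(om, p) \<in> flower_phi X (fst p)" using F2[OF oms st(1) star_Nil] unfolding om_def by simp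
    have b: "(q, om) \<in> flower_phi X (snd q)" using F2[OF st(2) oms star_Nil] unfolding om_def by simp
    define z where "z = fst p @ w @ snd q"
    have phiz: "flower_phi X z = flower_phi X (fst p) O flower_phi X w O flower_phi X (snd q)"
      unfolding z_def by (simp add: phi_append)
    have rz: "rect (flower_phi X z)" unfolding phiz using rect_comp[OF w(3)] .
    have oo: "(om, om) \<in> flower_phi X z" unfolding phiz using a b pq by blast
    have zs: "z \<in> star X" using phi_L[OF oo] unfolding om_def by simp
    have zA: "z \<in> lists A" unfolding z_def using w(1) states_lists[OF st(1) XA] states_lists[OF st(2) XA] by auto
    have "synchronizing A X z"
      unfolding synchronizing_def
    proof (intro conjI ballI impI)
      show "z \<in> lists A" using zA .
      fix u v assume "u \<in> lists A" "v \<in> lists A" "u @ z @ v \<in> star X"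
      then have "(om, om) \<in> flower_phi X (u @ z @ v)" using star_phi unfolding om_def by blast
      then obtain r s where rs: "(om, r) \<in> flower_phi X u" "(r, s) \<in> flower_phi X z" "(s, om) \<in> flower_phi X v"
        by (auto simp: phi_append)
      have "(r, om) \<in> flower_phi X z" "(om, s) \<in> flower_phi X z"
        using rz rs(2) oo unfolding rect_def by blast+
      then have "(om, om) \<in> flower_phi X (u @ z)" "(om, om) \<in> flower_phi X (z @ v)"
        using rs by (auto simp: phi_append)
      then show "u @ z \<in> star X" "z @ v \<in> star X"
        using phi_L unfolding om_def by fastforce+
    qed
    then show "synchronized A X" unfolding synchronized_def using zs by blast
  qed
qed

end
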